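(* Let $P$ be a generic set of $n$ points in the plane in convex position. Then $\operatorname{cr}(P)\ge \lfloor n/2\rfloor -1$.
   Context: A finite planar point set is in general position if no three of its points are collinear. It is generic if it is in general position and every subset of it has a unique (Euclidean) minimum spanning tree (MST); for a generic set $X$, $T_X$ denotes the MST of $X$, drawn with straight-line edges. For disjoint point sets $R,B$ with $R\cup B$ generic, $\operatorname{cr}(R,B)$ denotes the number of crossings between the edges of $T_R$ and the edges of $T_B$. For a generic point set $P$, $\operatorname{cr}(P)=\max \operatorname{cr}(R,B)$, the maximum over all partitions $P=R\cup B$ into two disjoint sets. *)

theory Defs
  imports "HOL-Analysis.Analysis"
begin

type_synonym point = "real^2"

definition general_position :: "point set \<Rightarrow> bool" where
  "general_position P \<longleftrightarrow>
     (\<forall>a\<in>P. \<forall>b\<in>P. \<forall>c\<in>P. a \<noteq> b \<and> a \<noteq> c \<and> b \<noteq> c \<longrightarrow> \<not> collinear {a, b, c})"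

definition all_edges :: "point set \<Rightarrow> point set set" where
  "all_edges X = {{a, b} | a b. a \<in> X \<and> b \<in> X \<and> a \<noteq> b}"

definition adj :: "point set set \<Rightarrow> (point \<times> point) set" where
  "adj E = {(a, b). {a, b} \<in> E}"

definition spanning_tree :: "point set \<Rightarrow> point set set \<Rightarrow> bool" where
  "spanning_tree X E \<longleftrightarrow> E \<subseteq> all_edges X
     \<and> (\<forall>a\<in>X. \<forall>b\<in>X. (a, b) \<in> (adj E)\<^sup>*)
     \<and> card E = card X - 1"

definition edge_len :: "point set \<Rightarrow> real" where
  "edge_len e = Sup {dist a b | a b. a \<in> e \<and> b \<in> e}"

definition weight :: "point set set \<Rightarrow> real" where
  "weight E = (\<Sum>e\<in>E. edge_len e)"

definition is_mst :: "point set \<Rightarrow> point set set \<Rightarrow> bool" where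
  "is_mst X E \<longleftrightarrow> spanning_tree X E \<and> (\<forall>E'. spanning_tree X E' \<longrightarrow> weight E \<le> weight E')"

definition generic :: "point set \<Rightarrow> bool" where
  "generic P \<longleftrightarrow> finite P \<and> general_position P \<and> (\<forall>S\<subseteq>P. \<exists>!E. is_mst S E)"

text \<open>The (unique, for generic sets) minimum spanning tree T_X.\<close>
definition mst :: "point set \<Rightarrow> point set set" where
  "mst X = (THE E. is_mst X E)"

text \<open>Number of crossing pairs (e, f), e an edge of T_R and f an edge of T_B,
  where edges are drawn as straight segments (convex hull of the two endpoints).\<close>
definition cr2 :: "point set \<Rightarrow> point set \<Rightarrow> nat" where
  "cr2 R B = card {(e, f). e \<in> mst R \<and> f \<in> mst B \<and> convex hull e \<inter> convex hull f \<noteq> {}}"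

definition cr :: "point set \<Rightarrow> nat" where
  "cr P = Max {cr2 R B | R B. R \<union> B = P \<and> R \<inter> B = {}}"

definition convex_position :: "point set \<Rightarrow> bool" where
  "convex_position P \<longleftrightarrow> (\<forall>p\<in>P. p \<notin> convex hull (P - {p}))"

end

theory Submission
  imports Defs
begin

definition det2 :: "point \<Rightarrow> point \<Rightarrow> real" where
  "det2 u v = u$1 * v$2 - u$2 * v$1"

lemma vec2_eqI: "(x::point)$1 = y$1 \<Longrightarrow> x$2 = y$2 \<Longrightarrow> x = y"
  by (simp add: vec_eq_iff forall_2)

lemma det2_par:
  fixes x y :: point
  assumes "x \<noteq> 0" "det2 x y = 0"
  shows "\<exists>k. y = k *\<^sub>R x"
proof -
  have d: "x$1 * y$2 = x$2 * y$1" using assms by (simp add: det2_def)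
  show ?thesis
  proof (cases "x$1 = 0")
    case True
    then have x2: "x$2 \<noteq> 0" using assms(1) by (auto simp: vec_eq_iff forall_2)
    then have "y$1 = 0" using d True by simp
    have "y = (y$2 / x$2) *\<^sub>R x"
      by (rule vec2_eqI) (use x2 \<open>y$1 = 0\<close> True in auto)
    then show ?thesis by blast
  next
    case F: False
    have "y$2 = (y$1 / x$1) * x$2" using F d by (simp add: field_simps)
    then have "y = (y$1 / x$1) *\<^sub>R x"
      by (intro vec2_eqI) (use F in auto)
    then show ?thesis by blast
  qed
qed

lemma det2_zero_collinear:
  assumes "det2 (b - a) (c - a) = 0"
  shows "collinear {a, b, c}"
proof -
  have e: "{a,b,c} = {b,a,c}" by auto
  have "collinear {0, b - a, c - a}"
    using det2_par[OF _ assms] by (cases "b - a = 0") (auto simp add: collinear_lemma)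
  then show ?thesis using collinear_3[of b a c] e by simp
qed


lemma div_comb: "(D::real) \<noteq> 0 \<Longrightarrow> D * Y = A * X + B * Z \<Longrightarrow> Y = (A/D) * X + (B/D) * Z"
proof -
  assume "D \<noteq> 0" "D * Y = A * X + B * Z"
  then have "Y = (A * X + B * Z) / D" by (simp add: field_simps)
  then show ?thesis by (simp add: add_divide_distrib)
qed

lemma between_sides:
  fixes p x y z :: point
  assumes uv: "det2 (x-p) (y-p) > 0" and vw: "det2 (y-p) (z-p) > 0" and uw: "det2 (x-p) (z-p) > 0"
    and nh: "y \<notin> convex hull {p,x,z}"
  shows "det2 (z-x) (p-x) > 0 \<and> det2 (z-x) (y-x) < 0"
proof
  show "det2 (z-x) (p-x) > 0" using uw by (simp add: det2_def algebra_simps)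
  show "det2 (z-x) (y-x) < 0"
  proof (rule ccontr)
    assume "\<not> det2 (z-x) (y-x) < 0"
    then have ge: "det2 (z-x) (y-x) \<ge> 0" by simp
    define D where "D = det2 (x-p) (z-p)"
    define a where "a = det2 (y-p) (z-p) / D"
    define b where "b = det2 (x-p) (y-p) / D"
    have Dp: "D > 0" using uw D_def by simp
    have e: "det2 (z-x) (y-x) = D - det2 (y-p) (z-p) - det2 (x-p) (y-p)"
      unfolding D_def by (simp add: det2_def algebra_simps)
    have ab: "a + b \<le> 1" using ge e Dp unfolding a_def b_def by (simp add: field_simps)
    have a0: "a \<ge> 0" "b \<ge> 0" using Dp uv vw unfolding a_def b_def by auto
    have i1: "D * (y-p)$1 = det2 (y-p) (z-p) * (x-p)$1 + det2 (x-p) (y-p) * (z-p)$1"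
      unfolding D_def det2_def by (simp add: algebra_simps)
    have i2: "D * (y-p)$2 = det2 (y-p) (z-p) * (x-p)$2 + det2 (x-p) (y-p) * (z-p)$2"
      unfolding D_def det2_def by (simp add: algebra_simps)
    have c1: "(y-p)$1 = a * (x-p)$1 + b * (z-p)$1"
      using div_comb[OF _ i1] Dp unfolding a_def b_def by simp
    have c2: "(y-p)$2 = a * (x-p)$2 + b * (z-p)$2"
      using div_comb[OF _ i2] Dp unfolding a_def b_def by simp
    have "y = (1 - a - b) *\<^sub>R p + a *\<^sub>R x + b *\<^sub>R z"
      using c1 c2 by (intro vec2_eqI) (simp_all add: algebra_simps)
    then have "y \<in> convex hull {p,x,z}"
      unfolding convex_hull_3 using ab a0 by (intro CollectI exI[of _ "1-a-b"] exI[of _ a] exI[of _ b]) auto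
    then show False using nh by simp
  qed
qed


lemma det2_lin: "det2 d ((1-l) *\<^sub>R u + l *\<^sub>R v) = (1-l) * det2 d u + l * det2 d v"
  by (simp add: det2_def algebra_simps)

lemma crossing:
  fixes b1 b2 r1 r2 :: point
  assumes o1: "det2 (b2-b1) (r1-b1) > 0" and o2: "det2 (b2-b1) (r2-b1) < 0"
    and n1: "b1 \<notin> convex hull {b2,r1,r2}" and n2: "b2 \<notin> convex hull {b1,r1,r2}"
  shows "convex hull {r1,r2} \<inter> convex hull {b1,b2} \<noteq> {}"
proof -
  define O1 where "O1 = det2 (b2-b1) (r1-b1)"
  define O2 where "O2 = det2 (b2-b1) (r2-b1)"
  define l where "l = O1 / (O1 - O2)"
  have O1p: "O1 > 0" and O2n: "O2 < 0" using o1 o2 O1_def O2_def by auto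
  have l0: "0 < l" "l < 1" using O1p O2n unfolding l_def by (auto simp: field_simps)
  define x where "x = (1-l) *\<^sub>R r1 + l *\<^sub>R r2"
  have xb: "x - b1 = (1-l) *\<^sub>R (r1 - b1) + l *\<^sub>R (r2 - b1)"
    unfolding x_def by (simp add: algebra_simps)
  have "det2 (b2-b1) (x - b1) = (1-l) * O1 + l * O2"
    unfolding xb det2_lin O1_def O2_def ..
  also have "\<dots> = 0" using O1p O2n unfolding l_def by (simp add: field_simps)
  finally have dz: "det2 (b2-b1) (x - b1) = 0" .
  have dn: "b2 - b1 \<noteq> 0" using O1p O1_def by (auto simp: det2_def)
  obtain t where t: "x - b1 = t *\<^sub>R (b2 - b1)" using det2_par[OF dn dz] by blast
  have xr: "x \<in> convex hull {r1,r2}"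
    unfolding convex_hull_2 x_def using l0 by (intro CollectI exI[of _ "1-l"] exI[of _ l]) auto
  consider "0 \<le> t \<and> t \<le> 1" | "t > 1" | "t < 0" by linarith
  then show ?thesis
  proof cases
    case 1
    have "x = b1 + t *\<^sub>R (b2 - b1)" using t by (simp add: algebra_simps)
    then have "x \<in> convex hull {b1,b2}"
      unfolding convex_hull_2_alt using 1 by blast
    then show ?thesis using xr by blast
  next
    case 2
    have "b2 = (1 - 1/t) *\<^sub>R b1 + ((1/t)*(1-l)) *\<^sub>R r1 + ((1/t)*l) *\<^sub>R r2"
    proof -
      have "x = b1 + t *\<^sub>R (b2 - b1)" using t by (simp add: algebra_simps)
      then have "(1/t) *\<^sub>R x + (1 - 1/t) *\<^sub>R b1 = (1/t) *\<^sub>R (b1 + t *\<^sub>R (b2 - b1)) + (1 - 1/t) *\<^sub>R b1" by simp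
      also have "\<dots> = b2" using 2 by (simp add: algebra_simps scaleR_diff_right)
      finally have "b2 = (1/t) *\<^sub>R x + (1 - 1/t) *\<^sub>R b1" by simp
      then show ?thesis unfolding x_def by (simp only: scaleR_add_right scaleR_scaleR add_ac)
    qed
    moreover have "0 \<le> 1 - 1/t" using 2 by (simp add: field_simps)
    moreover have "0 \<le> (1/t)*(1-l)" "0 \<le> (1/t)*l" using 2 l0 by auto
    moreover have "(1 - 1/t) + (1/t)*(1-l) + (1/t)*l = 1" by (simp add: algebra_simps add_divide_distrib[symmetric])
    ultimately have "b2 \<in> convex hull {b1,r1,r2}"
      unfolding convex_hull_3 by blast
    then show ?thesis using n2 by blast
  next
    case 3
    have "b1 = (1/(1-t)) *\<^sub>R x + (-t/(1-t)) *\<^sub>R b2"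
    proof -
      have "x = (1-t) *\<^sub>R b1 + t *\<^sub>R b2" using t by (simp add: algebra_simps)
      then have "(1/(1-t)) *\<^sub>R x = (1/(1-t)) *\<^sub>R ((1-t) *\<^sub>R b1 + t *\<^sub>R b2)" by simp
      also have "\<dots> = ((1/(1-t)) * (1-t)) *\<^sub>R b1 + ((1/(1-t)) * t) *\<^sub>R b2"
        by (simp only: scaleR_add_right scaleR_scaleR)
      also have "\<dots> = b1 + (t/(1-t)) *\<^sub>R b2" using 3 by simp
      finally have "(1/(1-t)) *\<^sub>R x = b1 + (t/(1-t)) *\<^sub>R b2" .
      then show ?thesis by (simp add: algebra_simps)
    qed
    then have "b1 = (-t/(1-t)) *\<^sub>R b2 + ((1/(1-t))*(1-l)) *\<^sub>R r1 + ((1/(1-t))*l) *\<^sub>R r2"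
      unfolding x_def by (simp only: scaleR_add_right scaleR_scaleR add_ac)
    moreover have "0 \<le> -t/(1-t)" using 3 by (simp add: field_simps)
    moreover have "0 \<le> (1/(1-t))*(1-l)" "0 \<le> (1/(1-t))*l" using 3 l0 by auto
    moreover have "(-t/(1-t)) + (1/(1-t))*(1-l) + (1/(1-t))*l = 1"
    proof -
      have nz: "1 - t \<noteq> 0" using 3 by simp
      have "(-t/(1-t)) + (1/(1-t))*(1-l) + (1/(1-t))*l = (-t + (1-l) + l)/(1-t)"
        by (simp only: add_divide_distrib times_divide_eq_left mult_1_left)
      also have "\<dots> = (1-t)/(1-t)" by simp
      also have "\<dots> = 1" using nz by simp
      finally show ?thesis .
    qed
    ultimately have "b1 \<in> convex hull {b2,r1,r2}"
      unfolding convex_hull_3 by blast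
    then show ?thesis using n1 by blast
  qed
qed


lemma path_cross:
  assumes "(x,y) \<in> (adj E)\<^sup>*" "E \<subseteq> all_edges R" "\<forall>r\<in>R. g r \<noteq> (0::real)" "g x > 0" "g y < 0"
  shows "\<exists>r r'. {r,r'} \<in> E \<and> g r > 0 \<and> g r' < 0"
proof -
  have "g y \<le> 0 \<longrightarrow> (\<exists>r r'. {r,r'} \<in> E \<and> g r > 0 \<and> g r' < 0)"
    using assms(1)
  proof (induction rule: rtrancl_induct)
    case base then show ?case using assms(4) by simp
  next
    case (step y z)
    have yz: "{y,z} \<in> E" using step.hyps(2) by (simp add: adj_def)
    then have "{y,z} \<in> all_edges R" using assms(2) by blast
    then have zR: "z \<in> R" and yR: "y \<in> R" unfolding all_edges_def by (auto simp: doubleton_eq_iff)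
    show ?case
    proof
      assume gz: "g z \<le> 0"
      then have gz': "g z < 0" using assms(3) zR by force
      show "\<exists>r r'. {r,r'} \<in> E \<and> g r > 0 \<and> g r' < 0"
      proof (cases "g y \<le> 0")
        case True then show ?thesis using step.IH by blast
      next
        case False then show ?thesis using yz gz' by (intro exI[of _ y] exI[of _ z]) auto
      qed
    qed
  qed
  then show ?thesis using assms(5) by simp
qed

lemma card_evens: "card {k::nat. k < m \<and> even k} = (m+1) div 2"
proof (induction m)
  case 0 then show ?case by simp
next
  case (Suc m)
  show ?case
  proof (cases "even m")
    case True
    then have "{k. k < Suc m \<and> even k} = insert m {k. k < m \<and> even k}" by (auto simp: less_Suc_eq)
    then show ?thesis using Suc True by simp
  next
    case False
    then have "{k. k < Suc m \<and> even k} = {k. k < m \<and> even k}" by (auto simp: less_Suc_eq)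
    then show ?thesis using Suc False by simp
  qed
qed

lemma finite_all_edges: "finite X \<Longrightarrow> finite (all_edges X)"
  by (rule finite_subset[of _ "Pow X"]) (auto simp: all_edges_def)

lemma generic_mst:
  assumes "generic P" "S \<subseteq> P"
  shows "is_mst S (mst S)"
  using assms unfolding generic_def mst_def by (metis theI')

lemma inner2: "inner (a::point) x = a$1 * x$1 + a$2 * x$2"
  by (simp add: inner_vec_def sum_2)


lemma cp_hull:
  assumes "convex_position P" "y \<in> P" "S \<subseteq> P - {y}"
  shows "y \<notin> convex hull S"
proof -
  have "convex hull S \<subseteq> convex hull (P - {y})" using assms(3) by (rule hull_mono)
  moreover have "y \<notin> convex hull (P - {y})" using assms(1,2) unfolding convex_position_def by blast
  ultimately show ?thesis by blast
qed

theorem theorem4: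
  fixes P :: "point set" and n :: nat
  assumes "generic P" and "convex_position P" and "card P = n"
  shows "int (cr P) \<ge> int (n div 2) - 1"
proof (cases "P = {}")
  case True then show ?thesis using assms(3) by simp
next
  case False
  note gen = assms(1) and cp = assms(2)
  have finP: "finite P" and gp: "general_position P" using gen by (auto simp: generic_def)
  obtain p0 where p0: "p0 \<in> P" using False by blast
  define P' where "P' = P - {p0}"
  have "p0 \<notin> convex hull P'" using cp p0 unfolding convex_position_def P'_def by blast
  moreover have "closed (convex hull P')"
    using finP P'_def by (simp add: compact_imp_closed finite_imp_compact_convex_hull)
  ultimately obtain a bb where ab: "inner a p0 < bb" "\<forall>x\<in>convex hull P'. inner a x > bb"
    using separating_hyperplane_closed_point[of "convex hull P'" p0] by auto
  define s where "s q = inner a (q - p0)" for q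
  define t where "t q = -(a$2) * (q - p0)$1 + a$1 * (q - p0)$2" for q
  define f where "f q = t q / s q" for q
  have spos: "s q > 0" if "q \<in> P'" for q
  proof -
    have "q \<in> convex hull P'" using that by (rule hull_inc)
    then have "bb < inner a q" using ab by blast
    then show ?thesis using ab unfolding s_def by (simp add: inner_diff_right)
  qed
  have a2: "a$1 * a$1 + a$2 * a$2 > 0" if "q \<in> P'" for q
  proof -
    have "a \<noteq> 0" using spos[OF that] unfolding s_def by auto
    then have "a$1 \<noteq> 0 \<or> a$2 \<noteq> 0" by (auto simp: vec_eq_iff forall_2)
    then show ?thesis by (simp add: sum_squares_gt_zero_iff)
  qed
  have ident: "s q * t q' - t q * s q' = (a$1 * a$1 + a$2 * a$2) * det2 (q - p0) (q' - p0)" for q q'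
    unfolding s_def t_def det2_def inner2 by (simp add: algebra_simps)
  have fdet: "det2 (q - p0) (q' - p0) > 0" if "q \<in> P'" "q' \<in> P'" "f q < f q'" for q q'
  proof -
    have "t q * s q' < t q' * s q" using that spos unfolding f_def by (simp add: divide_simps)
    then have "(a$1 * a$1 + a$2 * a$2) * det2 (q - p0) (q' - p0) > 0"
      using ident[of q q'] by (simp add: algebra_simps)
    then show ?thesis using a2[OF that(1)] by (simp add: zero_less_mult_iff)
  qed
  have noncol: "det2 (y - x) (z - x) \<noteq> 0" if "x \<in> P" "y \<in> P" "z \<in> P" "x \<noteq> y" "x \<noteq> z" "y \<noteq> z" for x y z
    using det2_zero_collinear[of y x z] gp that unfolding general_position_def by blast
  have finj: "inj_on f P'"
  proof (rule inj_onI)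
    fix q q' assume q: "q \<in> P'" "q' \<in> P'" "f q = f q'"
    show "q = q'"
    proof (rule ccontr)
      assume "q \<noteq> q'"
      have sq: "s q > 0" "s q' > 0" using q spos by auto
      have "t q * s q' = t q' * s q" using q(3) sq unfolding f_def by (simp add: frac_eq_eq)
      then have "(a$1 * a$1 + a$2 * a$2) * det2 (q - p0) (q' - p0) = 0" using ident[of q q'] by (simp add: algebra_simps)
      then have "det2 (q - p0) (q' - p0) = 0" using a2[OF q(1)] by (metis mult_eq_0_iff less_irrefl)
      then show False using noncol[of p0 q q'] q \<open>q \<noteq> q'\<close> p0 unfolding P'_def by auto
    qed
  qed
  obtain xs0 where xs0: "set xs0 = P'" "distinct xs0" using finite_distinct_list[of P'] finP P'_def by auto
  define ys where "ys = sort_key f xs0"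
  have ys: "set ys = P'" "distinct ys" "sorted (map f ys)" using xs0 unfolding ys_def by auto
  define m where "m = length ys"
  have mP: "m = n - 1"
    using ys assms(3) p0 finP distinct_card[of ys] unfolding m_def P'_def by (simp add: card_Diff_singleton)
  have ysP: "ys ! i \<in> P'" if "i < m" for i using ys that m_def by auto
  have fmono: "f (ys ! i) < f (ys ! j)" if "i < j" "j < m" for i j
  proof -
    have im: "i < m" using that by simp
    have "f (ys ! i) \<le> f (ys ! j)" using ys(3) that m_def sorted_nth_mono[of "map f ys" i j] by auto
    moreover have "ys ! i \<noteq> ys ! j" using nth_eq_iff_index_eq[OF ys(2), of i j] that m_def by simp
    then have "f (ys ! i) \<noteq> f (ys ! j)" using inj_on_eq_iff[OF finj ysP[OF im] ysP[OF that(2)]] by simp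
    ultimately show ?thesis by simp
  qed
  define B where "B = (\<lambda>k. ys ! k) ` {k. k < m \<and> even k}"
  define R where "R = P - B"
  have BP': "B \<subseteq> P'" using ysP B_def by auto
  have BP: "B \<subseteq> P" using BP' P'_def by auto
  have RP: "R \<subseteq> P" using R_def by auto
  have p0R: "p0 \<in> R" using p0 BP' R_def P'_def by auto
  have cardB: "card B = n div 2"
  proof -
    have "inj_on (\<lambda>k. ys ! k) {k. k < m \<and> even k}" using inj_on_nth[OF ys(2)] m_def by auto
    then have "card B = card {k. k < m \<and> even k}" unfolding B_def by (rule card_image)
    also have "\<dots> = (m+1) div 2" by (rule card_evens)
    also have "\<dots> = n div 2" using mP assms(3) False finP by (simp add: Suc_leI card_gt_0_iff)
    finally show ?thesis .
  qed
  have mR: "is_mst R (mst R)" and mB: "is_mst B (mst B)" using generic_mst[OF gen] RP BP by auto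
  have stR: "spanning_tree R (mst R)" and stB: "spanning_tree B (mst B)"
    using mR mB unfolding is_mst_def by auto
  have key: "\<exists>e\<in>mst R. convex hull e \<inter> convex hull {ys ! k1, ys ! k2} \<noteq> {}"
    if k: "k1 < k2" "k2 < m" "even k1" "even k2" for k1 k2
  proof -
    define x where "x = ys ! k1"
    define y where "y = ys ! (k1 + 1)"
    define z where "z = ys ! k2"
    have k1: "k1 + 1 < k2" using k by presburger
    have xP: "x \<in> P'" and yP: "y \<in> P'" and zP: "z \<in> P'" using ysP k k1 x_def y_def z_def by auto
    have xB: "x \<in> B" and zB: "z \<in> B" using k x_def z_def B_def by auto
    have yR: "y \<in> R"
    proof -
      have "y \<notin> B"
      proof
        assume "y \<in> B"
        then obtain k where kk: "k < m" "even k" "y = ys ! k" unfolding B_def by auto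
        moreover have "k1 + 1 < length ys" using k k1 m_def by simp
        have e1: "ys ! k = ys ! (k1+1)" using kk(3) y_def by (rule trans[OF sym])
        have "k < length ys" using kk(1) m_def by simp
        then have "k = k1 + 1" using nth_eq_iff_index_eq[OF ys(2) _ \<open>k1 + 1 < length ys\<close>, of k] e1 by blast
        then show False using kk k by simp
      qed
      then show ?thesis using yP R_def P'_def by auto
    qed
    have fxy: "f x < f y" and fyz: "f y < f z" and fxz: "f x < f z"
      using fmono k k1 x_def y_def z_def by auto
    have dxy: "det2 (x - p0) (y - p0) > 0" using fdet xP yP fxy by auto
    have dyz: "det2 (y - p0) (z - p0) > 0" using fdet yP zP fyz by auto
    have dxz: "det2 (x - p0) (z - p0) > 0" using fdet xP zP fxz by auto
    have xyz: "x \<noteq> y" "y \<noteq> z" "x \<noteq> z" using fxy fyz fxz by auto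
    have "y \<notin> convex hull {p0, x, z}"
    proof -
      have "{p0, x, z} \<subseteq> P - {y}" using xP zP xyz p0 yP P'_def by auto
      moreover have "y \<in> P" using yP P'_def by auto
      ultimately show ?thesis using cp_hull[OF cp] by blast
    qed
    then have sides: "det2 (z-x) (p0-x) > 0" "det2 (z-x) (y-x) < 0"
      using between_sides[OF dxy dyz dxz] by auto
    define g where "g r = det2 (z - x) (r - x)" for r
    have gR: "\<forall>r\<in>R. g r \<noteq> 0"
    proof
      fix r assume r: "r \<in> R"
      then have "r \<noteq> x" "r \<noteq> z" "r \<in> P" using xB zB R_def by auto
      then show "g r \<noteq> 0" unfolding g_def using noncol[of x z r] xP zP xyz P'_def by auto
    qed
    have conn: "(p0, y) \<in> (adj (mst R))\<^sup>*" using stR p0R yR unfolding spanning_tree_def by blast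
    have ER: "mst R \<subseteq> all_edges R" using stR unfolding spanning_tree_def by blast
    obtain r r' where rr: "{r,r'} \<in> mst R" "g r > 0" "g r' < 0"
      using path_cross[OF conn ER gR] sides g_def by auto
    have "{r,r'} \<in> all_edges R" using rr ER by blast
    then have rR: "r \<in> R" "r' \<in> R" unfolding all_edges_def by (auto simp: doubleton_eq_iff)
    then have rP: "r \<in> P" "r' \<in> P" "r \<noteq> x" "r' \<noteq> x" "r \<noteq> z" "r' \<noteq> z" using R_def xB zB by auto
    have n1: "x \<notin> convex hull {z, r, r'}"
    proof -
      have "{z, r, r'} \<subseteq> P - {x}" using rP zP xyz P'_def by auto
      moreover have "x \<in> P" using xP P'_def by auto
      ultimately show ?thesis using cp_hull[OF cp] by blast
    qed
    have n2: "z \<notin> convex hull {x, r, r'}"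
    proof -
      have "{x, r, r'} \<subseteq> P - {z}" using rP xP xyz P'_def by auto
      moreover have "z \<in> P" using zP P'_def by auto
      ultimately show ?thesis using cp_hull[OF cp] by blast
    qed
    have "convex hull {r,r'} \<inter> convex hull {x,z} \<noteq> {}"
      using crossing[of z x r r', OF rr(2)[unfolded g_def] rr(3)[unfolded g_def] n1 n2] by simp
    then show ?thesis using rr x_def z_def by blast
  qed
  have key2: "\<exists>e\<in>mst R. convex hull e \<inter> convex hull fb \<noteq> {}" if fb: "fb \<in> mst B" for fb
  proof -
    have "fb \<in> all_edges B" using fb stB unfolding spanning_tree_def by blast
    then obtain b1 b2 where b: "fb = {b1,b2}" "b1 \<in> B" "b2 \<in> B" "b1 \<noteq> b2" unfolding all_edges_def by auto
    then obtain k1 k2 where kk: "b1 = ys ! k1" "b2 = ys ! k2" "k1 < m" "k2 < m" "even k1" "even k2"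
      unfolding B_def by auto
    have "k1 \<noteq> k2" using kk b by auto
    then consider "k1 < k2" | "k2 < k1" by linarith
    then show ?thesis
    proof cases
      case 1 then show ?thesis using key[of k1 k2] kk b by auto
    next
      case 2 then show ?thesis using key[of k2 k1] kk b by (auto simp: insert_commute)
    qed
  qed
  then have "\<forall>fb\<in>mst B. \<exists>e. e \<in> mst R \<and> convex hull e \<inter> convex hull fb \<noteq> {}" by blast
  then have "\<exists>h. \<forall>fb\<in>mst B. h fb \<in> mst R \<and> convex hull (h fb) \<inter> convex hull fb \<noteq> {}" by (rule bchoice)
  then obtain h where h: "\<And>fb. fb \<in> mst B \<Longrightarrow> h fb \<in> mst R \<and> convex hull (h fb) \<inter> convex hull fb \<noteq> {}"
    by blast
  define S where "S = {(e, fb). e \<in> mst R \<and> fb \<in> mst B \<and> convex hull e \<inter> convex hull fb \<noteq> {}}"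
  have finR: "finite R" using finite_subset[OF RP finP] .
  have finB: "finite B" using finite_subset[OF BP finP] .
  have ER0: "mst R \<subseteq> all_edges R" using stR unfolding spanning_tree_def by blast
  have EB0: "mst B \<subseteq> all_edges B" using stB unfolding spanning_tree_def by blast
  have fmR: "finite (mst R)" using finite_subset[OF ER0 finite_all_edges[OF finR]] .
  have fmB: "finite (mst B)" using finite_subset[OF EB0 finite_all_edges[OF finB]] .
  have "S \<subseteq> mst R \<times> mst B" unfolding S_def by blast
  then have finS: "finite S" using finite_cartesian_product[OF fmR fmB] by (rule finite_subset)
  have "(\<lambda>fb. (h fb, fb)) ` mst B \<subseteq> S"
  proof
    fix pr assume "pr \<in> (\<lambda>fb. (h fb, fb)) ` mst B"
    then obtain fb where "fb \<in> mst B" "pr = (h fb, fb)" by blast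
    then show "pr \<in> S" using h[of fb] unfolding S_def by simp
  qed
  moreover have "inj_on (\<lambda>fb. (h fb, fb)) (mst B)" by (rule inj_onI) auto
  ultimately have "card (mst B) \<le> card S"
  proof -
    assume a1: "(\<lambda>fb. (h fb, fb)) ` mst B \<subseteq> S" and a2: "inj_on (\<lambda>fb. (h fb, fb)) (mst B)"
    have "card ((\<lambda>fb. (h fb, fb)) ` mst B) \<le> card S" using card_mono[OF finS a1] .
    then show ?thesis using card_image[OF a2] by simp
  qed
  moreover have "card (mst B) = card B - 1" using stB unfolding spanning_tree_def by blast
  moreover have "cr2 R B = card S" unfolding cr2_def S_def ..
  moreover have "cr2 R B \<le> cr P"
  proof -
    have "{cr2 R B | R B. R \<union> B = P \<and> R \<inter> B = {}} \<subseteq> (\<lambda>R. cr2 R (P - R)) ` Pow P"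
    proof
      fix c assume "c \<in> {cr2 R B | R B. R \<union> B = P \<and> R \<inter> B = {}}"
      then obtain R' B' where rb: "c = cr2 R' B'" "R' \<union> B' = P" "R' \<inter> B' = {}" by blast
      then have "B' = P - R'" by blast
      then have "c = cr2 R' (P - R')" using rb by simp
      moreover have "R' \<in> Pow P" using rb by blast
      ultimately show "c \<in> (\<lambda>R. cr2 R (P - R)) ` Pow P" by blast
    qed
    then have "finite {cr2 R B | R B. R \<union> B = P \<and> R \<inter> B = {}}"
      by (rule finite_subset) (simp add: finP)
    moreover have "cr2 R B \<in> {cr2 R B | R B. R \<union> B = P \<and> R \<inter> B = {}}"
      using R_def BP by blast
    ultimately show ?thesis unfolding cr_def by (rule Max_ge)
  qed
  ultimately show ?thesis using cardB by linarith
qed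

end
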